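(* Let $\pi_1,\pi_2$ be two policies with the same information set $\mathcal{I}$ in a finite-horizon POMDP $\mathcal{M}$, and let $j\in\{\mathcal{S},\mathcal{O}\}$. Let $\mathcal{T}_j(\pi_1,\pi_2)$ be the set of length-$T$ trajectories $\tau_j$ (over states if $j=\mathcal{S}$, over observations if $j=\mathcal{O}$) that have positive probability under $p^{\pi_1}$ or under $p^{\pi_2}$, and let $\tau_j^\star\in\arg\max_{\tau\in\mathcal{T}_j(\pi_1,\pi_2)}H(d(\tau))$. Then $$\big|J^{j}(\pi_1)-J^{j}(\pi_2)\big|\le T\,H(d(\tau_j^\star))\,d^{TV}(\pi_1,\pi_2),$$ where $d^{TV}(\pi_1,\pi_2):=\sup_{i\in\mathcal{I}}d^{TV}\big(\pi_1(\cdot\mid i),\pi_2(\cdot\mid i)\big)$.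
   Context: A finite-horizon POMDP $\mathcal{M}=(\mathcal{S},\mathcal{A},\mathcal{O},\mathbb{P},\mathbb{O},T,\mu)$ has finite state, action and observation sets, transition kernel $\mathbb{P}(s'\mid s,a)$, observation kernel $\mathbb{O}(o\mid s)$, horizon $T$, initial distribution $\mu$. Under a policy $\pi:\mathcal{I}\to\Delta(\mathcal{A})$: $s_1\sim\mu$, $o_t\sim\mathbb{O}(\cdot\mid s_t)$ for $t\le T$, and for $t<T$, $a_t\sim\pi(\cdot\mid i_t)$, $s_{t+1}\sim\mathbb{P}(\cdot\mid s_t,a_t)$, where $i_t$ is a deterministic function of the history $(o_1,a_1,\dots,a_{t-1},o_t)$. $p^\pi$ is the law of the joint trajectory, with state trajectory $\tau_{\mathcal{S}}=(s_1,\dots,s_T)$ and observation trajectory $\tau_{\mathcal{O}}=(o_1,\dots,o_T)$. For a sequence $x=(x_1,\dots,x_T)$ over a finite set, $d(x)$ is its empirical distribution $d_y(x)=\frac1T\sum_t\mathbf{1}\{x_t=y\}$ and $H$ is Shannon entropy (natural log). Objectives: $J^{\mathcal{S}}(\pi)=\mathbb{E}_{p^\pi}[H(d(\tau_{\mathcal{S}}))]$ (Maximum State Entropy) and $J^{\mathcal{O}}(\pi)=\mathbb{E}_{p^\pi}[H(d(\tau_{\mathcal{O}}))]$ (Maximum Observation Entropy). $d^{TV}(p,q)=\frac12\sum_x|p(x)-q(x)|$ is total variation distance. *)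

theory Defs
  imports "HOL-Probability.Probability"
begin

text \<open>A policy is a map pi from an
information set 'i to distributions over actions; the information
i_t = info (o_1..o_t) (a_1..a_{t-1}) is a deterministic function of the history.
Trajectories are lists: states ss (length T), observations os (length T),
actions as (length T-1), 0-indexed.\<close>

definition trajs :: "nat \<Rightarrow> ('s list \<times> 'o list \<times> 'a list) set" where
  "trajs T = {(ss, os, as). length ss = T \<and> length os = T \<and> length as = T - 1}"

definition traj_prob ::
  "'s pmf \<Rightarrow> ('s \<Rightarrow> 'a \<Rightarrow> 's pmf) \<Rightarrow> ('s \<Rightarrow> 'o pmf) \<Rightarrow> ('o list \<Rightarrow> 'a list \<Rightarrow> 'i)
   \<Rightarrow> ('i \<Rightarrow> 'a pmf) \<Rightarrow> nat \<Rightarrow> 's list \<Rightarrow> 'o list \<Rightarrow> 'a list \<Rightarrow> real" where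
  "traj_prob mu P Obs info pol T ss os as =
     pmf mu (ss ! 0)
     * (\<Prod>t<T. pmf (Obs (ss ! t)) (os ! t))
     * (\<Prod>t<T - 1. pmf (pol (info (take (Suc t) os) (take t as))) (as ! t)
                   * pmf (P (ss ! t) (as ! t)) (ss ! Suc t))"

text \<open>Empirical distribution of a length-T sequence and Shannon entropy (natural log;
0 ln 0 = 0 since ln 0 = 0 in Isabelle).\<close>

definition emp_dist :: "nat \<Rightarrow> 'x list \<Rightarrow> 'x \<Rightarrow> real" where
  "emp_dist T xs y = real (card {t. t < T \<and> xs ! t = y}) / real T"

definition shannon_H :: "('x::finite \<Rightarrow> real) \<Rightarrow> real" where
  "shannon_H d = - (\<Sum>y\<in>UNIV. d y * ln (d y))"

definition state_traj_prob where
  "state_traj_prob mu P Obs info pol T ss =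
     (\<Sum>(ss', os, as)\<in>trajs T. if ss' = ss then traj_prob mu P Obs info pol T ss' os as else 0)"

definition obs_traj_prob where
  "obs_traj_prob mu P Obs info pol T os =
     (\<Sum>(ss, os', as)\<in>trajs T. if os' = os then traj_prob mu P Obs info pol T ss os' as else 0)"

definition J_state where
  "J_state mu P Obs info pol T =
     (\<Sum>(ss, os, as)\<in>trajs T. traj_prob mu P Obs info pol T ss os as * shannon_H (emp_dist T ss))"

definition J_obs where
  "J_obs mu P Obs info pol T =
     (\<Sum>(ss, os, as)\<in>trajs T. traj_prob mu P Obs info pol T ss os as * shannon_H (emp_dist T os))"

definition tv_pmf :: "('x::finite) pmf \<Rightarrow> 'x pmf \<Rightarrow> real" where
  "tv_pmf p q = (1/2) * (\<Sum>x\<in>UNIV. \<bar>pmf p x - pmf q x\<bar>)"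

definition tv_policy :: "('i \<Rightarrow> ('x::finite) pmf) \<Rightarrow> ('i \<Rightarrow> 'x pmf) \<Rightarrow> real" where
  "tv_policy pol1 pol2 = (SUP i. tv_pmf (pol1 i) (pol2 i))"

end

theory Submission
  imports Defs
begin


lemma sum_pmf_UNIV: "(\<Sum>x\<in>(UNIV::'x::finite set). pmf p x) = 1"
  by (rule sum_pmf_eq_1) auto

lemma finite_len: "finite {xs :: ('x::finite) list. length xs = n}"
  using finite_lists_length_eq[of "UNIV::'x set" n] by simp

lemma trajs_prod: "trajs T = {ss. length ss = T} \<times> {os. length os = T} \<times> {acts. length acts = T - 1}"
  unfolding trajs_def by auto

lemma finite_trajs: "finite (trajs T :: (('s::finite) list \<times> ('o::finite) list \<times> ('a::finite) list) set)"
  unfolding trajs_prod by (intro finite_cartesian_product finite_len)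

definition ext3 :: "('s list \<times> 'o list \<times> 'a list) \<Rightarrow> ('a \<times> 's \<times> 'o) \<Rightarrow> ('s list \<times> 'o list \<times> 'a list)" where
  "ext3 x y = (case x of (ss, os, acts) \<Rightarrow> case y of (a, s, ob) \<Rightarrow> (ss @ [s], os @ [ob], acts @ [a]))"

lemma trajs_Suc:
  assumes "T \<ge> 1"
  shows "trajs (Suc T) = (\<lambda>(x, y). ext3 x y) ` (trajs T \<times> UNIV)"
proof
  show "(\<lambda>(x, y). ext3 x y) ` (trajs T \<times> UNIV) \<subseteq> trajs (Suc T)"
    using assms by (auto simp: ext3_def trajs_def)
next
  show "trajs (Suc T) \<subseteq> (\<lambda>(x, y). ext3 x y) ` (trajs T \<times> UNIV)"
  proof
    fix z assume z: "z \<in> trajs (Suc T)"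
    obtain ss os acts where zz: "z = (ss, os, acts)" by (cases z) auto
    have l: "length ss = Suc T" "length os = Suc T" "length acts = T"
      using z zz by (auto simp: trajs_def)
    have ne: "ss \<noteq> []" "os \<noteq> []" "acts \<noteq> []" using l assms by auto
    have "z = ext3 (butlast ss, butlast os, butlast acts) (last acts, last ss, last os)"
      using ne zz by (simp add: ext3_def)
    moreover have "(butlast ss, butlast os, butlast acts) \<in> trajs T"
      using l by (auto simp: trajs_def)
    ultimately show "z \<in> (\<lambda>(x, y). ext3 x y) ` (trajs T \<times> UNIV)"
      by (auto intro!: image_eqI[where x="((butlast ss, butlast os, butlast acts), (last acts, last ss, last os))"])
  qed
qed

lemma inj_ext3: "inj_on (\<lambda>(x, y). ext3 x y) A"
  by (auto simp: inj_on_def ext3_def split: prod.splits)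

lemma sum_trajs_Suc:
  fixes g :: "(('s::finite) list \<times> ('o::finite) list \<times> ('a::finite) list) \<Rightarrow> real"
  assumes "T \<ge> 1"
  shows "sum g (trajs (Suc T)) = (\<Sum>x\<in>trajs T. \<Sum>y\<in>UNIV. g (ext3 x y))"
proof -
  have "sum g (trajs (Suc T)) = sum (g \<circ> (\<lambda>(x, y). ext3 x y)) (trajs T \<times> UNIV)"
    unfolding trajs_Suc[OF assms] by (rule sum.reindex[OF inj_ext3])
  also have "\<dots> = (\<Sum>x\<in>trajs T. \<Sum>y\<in>UNIV. g (ext3 x y))"
    by (subst sum.cartesian_product) (simp add: case_prod_unfold)
  finally show ?thesis .
qed

lemma traj_prob_snoc:
  assumes l: "length ss = T" "length os = T" "length acts = T - 1" and T: "T \<ge> 1"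
  shows "traj_prob mu P Obs info pol (Suc T) (ss @ [s]) (os @ [ob]) (acts @ [a]) =
    traj_prob mu P Obs info pol T ss os acts *
      (pmf (pol (info os acts)) a * (pmf (P (last ss) a) s * pmf (Obs s) ob))"
proof -
  have A: "(ss @ [s]) ! 0 = ss ! 0" using l T by (simp add: nth_append)
  have B: "(\<Prod>t<Suc T. pmf (Obs ((ss@[s]) ! t)) ((os@[ob]) ! t)) =
      (\<Prod>t<T. pmf (Obs (ss ! t)) (os ! t)) * pmf (Obs s) ob"
    using l by (simp add: prod.lessThan_Suc nth_append)
  have C1: "(\<Prod>t<T - 1. pmf (pol (info (take (Suc t) (os@[ob])) (take t (acts@[a])))) ((acts@[a]) ! t)
                   * pmf (P ((ss@[s]) ! t) ((acts@[a]) ! t)) ((ss@[s]) ! Suc t))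
     = (\<Prod>t<T - 1. pmf (pol (info (take (Suc t) os) (take t acts))) (acts ! t)
                   * pmf (P (ss ! t) (acts ! t)) (ss ! Suc t))"
    using l by (intro prod.cong) (auto simp: nth_append)
  have lastss: "ss ! (T - 1) = last ss" using l T by (subst last_conv_nth) auto
  have C: "(\<Prod>t<Suc T - 1. pmf (pol (info (take (Suc t) (os@[ob])) (take t (acts@[a])))) ((acts@[a]) ! t)
                   * pmf (P ((ss@[s]) ! t) ((acts@[a]) ! t)) ((ss@[s]) ! Suc t))
     = (\<Prod>t<T - 1. pmf (pol (info (take (Suc t) os) (take t acts))) (acts ! t)
                   * pmf (P (ss ! t) (acts ! t)) (ss ! Suc t)) * (pmf (pol (info os acts)) a * pmf (P (last ss) a) s)"
  proof -
    have e: "Suc T - 1 = Suc (T - 1)" using T by simp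
    show ?thesis unfolding e prod.lessThan_Suc C1
      using l T lastss by (simp add: nth_append)
  qed
  show ?thesis unfolding traj_prob_def A B C by (simp add: mult_ac)
qed


definition tp where
  "tp mu P Obs info pol T x = (case x of (ss, os, acts) \<Rightarrow> traj_prob mu P Obs info pol T ss os acts)"

lemma traj_prob_nonneg: "traj_prob mu P Obs info pol T ss os acts \<ge> 0"
  unfolding traj_prob_def by (intro mult_nonneg_nonneg prod_nonneg) auto

lemma tp_nonneg: "tp mu P Obs info pol T x \<ge> 0"
  unfolding tp_def by (auto simp: traj_prob_nonneg split: prod.splits)

lemma sum_UNIV3: "(\<Sum>y\<in>(UNIV::('x::finite \<times> 'y::finite \<times> 'z::finite) set). f y)
    = (\<Sum>a\<in>UNIV. \<Sum>b\<in>UNIV. \<Sum>c\<in>UNIV. f (a, b, c))"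
  unfolding UNIV_Times_UNIV[symmetric] sum.cartesian_product by simp

lemma sum_UNIV2: "(\<Sum>y\<in>(UNIV::('x::finite \<times> 'y::finite) set). f y)
    = (\<Sum>a\<in>UNIV. \<Sum>b\<in>UNIV. f (a, b))"
  unfolding UNIV_Times_UNIV[symmetric] sum.cartesian_product by simp

lemma K1: "(\<Sum>s\<in>UNIV. \<Sum>ob\<in>UNIV. pmf (Q::'s::finite pmf) s * pmf (Obs s) (ob::'o::finite)) = 1"
  by (simp add: sum_distrib_left[symmetric] sum_pmf_UNIV)

lemma tp_ext3:
  assumes "x \<in> trajs T" "T \<ge> 1" "x = (ss, os, acts)"
  shows "tp mu P Obs info pol (Suc T) (ext3 x (a, s, ob)) =
    tp mu P Obs info pol T x * (pmf (pol (info os acts)) a * (pmf (P (last ss) a) s * pmf (Obs s) ob))"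
  using assms traj_prob_snoc[of ss T os acts] by (simp add: tp_def ext3_def trajs_def)

lemma trajs_one: "trajs (Suc 0) = (\<lambda>(s, ob). ([s], [ob], [])) ` UNIV"
  unfolding trajs_def
  by (auto simp: length_Suc_conv image_iff)

lemma tp_one: "tp mu P Obs info pol (Suc 0) ([s], [ob], []) = pmf mu s * pmf (Obs s) ob"
  by (simp add: tp_def traj_prob_def)

lemma sum_trajs_one:
  fixes g :: "(('s::finite) list \<times> ('o::finite) list \<times> ('a::finite) list) \<Rightarrow> real"
  shows "sum g (trajs (Suc 0)) = (\<Sum>s\<in>UNIV. \<Sum>ob\<in>UNIV. g ([s], [ob], []))"
proof -
  have inj: "inj_on (\<lambda>(s::'s, ob::'o). ([s], [ob], []::'a list)) UNIV"
    by (auto simp: inj_on_def)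
  show ?thesis unfolding trajs_one sum.reindex[OF inj]
    by (simp add: sum_UNIV2)
qed

lemma tp_sum1:
  fixes mu :: "'s::finite pmf" and P :: "'s \<Rightarrow> 'a::finite \<Rightarrow> 's pmf" and Obs :: "'s \<Rightarrow> 'o::finite pmf"
  assumes "T \<ge> 1"
  shows "(\<Sum>x\<in>trajs T. tp mu P Obs info pol T x) = 1"
  using assms
proof (induct T rule: nat_induct_at_least)
  case base
  show ?case unfolding One_nat_def sum_trajs_one tp_one
    by (simp add: sum_distrib_left[symmetric] sum_pmf_UNIV)
next
  case (Suc T)
  have "(\<Sum>x\<in>trajs (Suc T). tp mu P Obs info pol (Suc T) x)
      = (\<Sum>x\<in>trajs T. \<Sum>y\<in>UNIV. tp mu P Obs info pol (Suc T) (ext3 x y))"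
    by (rule sum_trajs_Suc[OF Suc(1)])
  also have "\<dots> = (\<Sum>x\<in>trajs T. tp mu P Obs info pol T x)"
  proof (rule sum.cong[OF refl])
    fix x :: "'s list \<times> 'o list \<times> 'a list" assume x: "x \<in> trajs T"
    obtain ss os acts where xx: "x = (ss, os, acts)" by (cases x) auto
    have "(\<Sum>y\<in>UNIV. tp mu P Obs info pol (Suc T) (ext3 x y))
      = (\<Sum>a\<in>UNIV. \<Sum>s\<in>UNIV. \<Sum>ob\<in>UNIV. tp mu P Obs info pol T x *
           (pmf (pol (info os acts)) a * (pmf (P (last ss) a) s * pmf (Obs s) ob)))"
      unfolding sum_UNIV3 by (intro sum.cong refl) (rule tp_ext3[OF x Suc(1) xx])
    also have "\<dots> = tp mu P Obs info pol T x * (\<Sum>a\<in>UNIV. pmf (pol (info os acts)) a *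
           (\<Sum>s\<in>UNIV. \<Sum>ob\<in>UNIV. pmf (P (last ss) a) s * pmf (Obs s) ob))"
      by (simp add: sum_distrib_left mult_ac)
    also have "\<dots> = tp mu P Obs info pol T x"
      by (simp add: K1 sum_pmf_UNIV)
    finally show "(\<Sum>y\<in>UNIV. tp mu P Obs info pol (Suc T) (ext3 x y)) = tp mu P Obs info pol T x" .
  qed
  also have "\<dots> = 1" by (rule Suc(2))
  finally show ?case .
qed


lemma tv_pmf_nonneg: "tv_pmf p q \<ge> 0"
  unfolding tv_pmf_def by (simp add: sum_nonneg)

lemma tv_pmf_le1: "tv_pmf (p::'x::finite pmf) q \<le> 1"
proof -
  have "(\<Sum>x\<in>UNIV. \<bar>pmf p x - pmf q x\<bar>) \<le> (\<Sum>x\<in>UNIV. pmf p x + pmf q x)"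
    by (intro sum_mono) (smt (verit) pmf_nonneg)
  also have "\<dots> = 2" by (simp add: sum.distrib sum_pmf_UNIV)
  finally show ?thesis unfolding tv_pmf_def by simp
qed

lemma tv_pol_bdd: "bdd_above (range (\<lambda>i. tv_pmf ((pol1::'i \<Rightarrow> 'x::finite pmf) i) (pol2 i)))"
  by (rule bdd_aboveI[of _ 1]) (auto simp: tv_pmf_le1)

lemma tv_pmf_le_pol: "tv_pmf ((pol1::'i \<Rightarrow> 'x::finite pmf) i) (pol2 i) \<le> tv_policy pol1 pol2"
  unfolding tv_policy_def by (rule cSUP_upper[OF UNIV_I tv_pol_bdd])

lemma tv_policy_nonneg: "tv_policy (pol1::'i \<Rightarrow> 'x::finite pmf) pol2 \<ge> 0"
  using tv_pmf_nonneg tv_pmf_le_pol order_trans by metis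

lemma abs_split_ineq:
  fixes A B p q k :: real
  assumes "p \<ge> 0" "k \<ge> 0" "B \<ge> 0"
  shows "\<bar>A * (p * k) - B * (q * k)\<bar> \<le> \<bar>A - B\<bar> * (p * k) + B * (\<bar>p - q\<bar> * k)"
proof -
  have "A * (p * k) - B * (q * k) = (A - B) * (p * k) + B * ((p - q) * k)" by algebra
  hence "\<bar>A * (p * k) - B * (q * k)\<bar> \<le> \<bar>(A - B) * (p * k)\<bar> + \<bar>B * ((p - q) * k)\<bar>" by simp
  also have "\<dots> = \<bar>A - B\<bar> * (p * k) + B * (\<bar>p - q\<bar> * k)"
    using assms by (simp add: abs_mult)
  finally show ?thesis .
qed

lemma tp_L1:
  fixes mu :: "'s::finite pmf" and P :: "'s \<Rightarrow> 'a::finite \<Rightarrow> 's pmf" and Obs :: "'s \<Rightarrow> 'o::finite pmf"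
    and pol1 pol2 :: "'i \<Rightarrow> 'a pmf"
  assumes "T \<ge> 1"
  shows "(\<Sum>x\<in>trajs T. \<bar>tp mu P Obs info pol1 T x - tp mu P Obs info pol2 T x\<bar>)
           \<le> 2 * real (T - 1) * tv_policy pol1 pol2"
  using assms
proof (induct T rule: nat_induct_at_least)
  case base
  have "tp mu P Obs info pol1 (Suc 0) x = tp mu P Obs info pol2 (Suc 0) x" for x
    by (simp add: tp_def traj_prob_def split: prod.splits)
  then show ?case by simp
next
  case (Suc T)
  let ?tv = "tv_policy pol1 pol2"
  let ?p1 = "tp mu P Obs info pol1" and ?p2 = "tp mu P Obs info pol2"
  have "(\<Sum>x\<in>trajs (Suc T). \<bar>?p1 (Suc T) x - ?p2 (Suc T) x\<bar>)
      = (\<Sum>x\<in>trajs T. \<Sum>y\<in>UNIV. \<bar>?p1 (Suc T) (ext3 x y) - ?p2 (Suc T) (ext3 x y)\<bar>)"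
    by (rule sum_trajs_Suc[OF Suc(1)])
  also have "\<dots> \<le> (\<Sum>x\<in>trajs T. \<bar>?p1 T x - ?p2 T x\<bar> + ?p2 T x * (2 * ?tv))"
  proof (rule sum_mono)
    fix x :: "'s list \<times> 'o list \<times> 'a list" assume x: "x \<in> trajs T"
    obtain ss os acts where xx: "x = (ss, os, acts)" by (cases x) auto
    define q1 where "q1 = pol1 (info os acts)"
    define q2 where "q2 = pol2 (info os acts)"
    define K where "K = (\<lambda>a s ob. pmf (P (last ss) a) s * pmf (Obs s) ob)"
    have K0: "K a s ob \<ge> 0" for a s ob unfolding K_def by simp
    have K1': "(\<Sum>s\<in>UNIV. \<Sum>ob\<in>UNIV. K a s ob) = 1" for a unfolding K_def by (rule K1)
    have "(\<Sum>y\<in>UNIV. \<bar>?p1 (Suc T) (ext3 x y) - ?p2 (Suc T) (ext3 x y)\<bar>)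
      = (\<Sum>a\<in>UNIV. \<Sum>s\<in>UNIV. \<Sum>ob\<in>UNIV.
           \<bar>?p1 T x * (pmf q1 a * K a s ob) - ?p2 T x * (pmf q2 a * K a s ob)\<bar>)"
      unfolding sum_UNIV3 q1_def q2_def K_def
      by (intro sum.cong refl) (simp only: tp_ext3[OF x Suc(1) xx])
    also have "\<dots> \<le> (\<Sum>a\<in>UNIV. \<Sum>s\<in>UNIV. \<Sum>ob\<in>UNIV.
           \<bar>?p1 T x - ?p2 T x\<bar> * (pmf q1 a * K a s ob) + ?p2 T x * (\<bar>pmf q1 a - pmf q2 a\<bar> * K a s ob))"
      by (intro sum_mono abs_split_ineq K0 tp_nonneg pmf_nonneg)
    also have "\<dots> = (\<Sum>a\<in>UNIV. \<bar>?p1 T x - ?p2 T x\<bar> * pmf q1 a + ?p2 T x * \<bar>pmf q1 a - pmf q2 a\<bar>)"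
    proof (rule sum.cong[OF refl])
      fix a
      show "(\<Sum>s\<in>UNIV. \<Sum>ob\<in>UNIV.
           \<bar>?p1 T x - ?p2 T x\<bar> * (pmf q1 a * K a s ob) + ?p2 T x * (\<bar>pmf q1 a - pmf q2 a\<bar> * K a s ob))
         = \<bar>?p1 T x - ?p2 T x\<bar> * pmf q1 a + ?p2 T x * \<bar>pmf q1 a - pmf q2 a\<bar>"
      proof -
        have "(\<Sum>s\<in>UNIV. \<Sum>ob\<in>UNIV.
           \<bar>?p1 T x - ?p2 T x\<bar> * (pmf q1 a * K a s ob) + ?p2 T x * (\<bar>pmf q1 a - pmf q2 a\<bar> * K a s ob))
          = (\<bar>?p1 T x - ?p2 T x\<bar> * pmf q1 a + ?p2 T x * \<bar>pmf q1 a - pmf q2 a\<bar>) * (\<Sum>s\<in>UNIV. \<Sum>ob\<in>UNIV. K a s ob)"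
          unfolding sum_distrib_left by (intro sum.cong refl) (simp add: algebra_simps)
        then show ?thesis by (simp add: K1')
      qed
    qed
    also have "\<dots> = \<bar>?p1 T x - ?p2 T x\<bar> + ?p2 T x * (2 * tv_pmf q1 q2)"
      by (simp add: sum.distrib sum_distrib_left[symmetric] sum_pmf_UNIV tv_pmf_def)
    also have "\<dots> \<le> \<bar>?p1 T x - ?p2 T x\<bar> + ?p2 T x * (2 * ?tv)"
      unfolding q1_def q2_def
      by (intro add_left_mono mult_left_mono tp_nonneg) (auto simp: tv_pmf_le_pol)
    finally show "(\<Sum>y\<in>UNIV. \<bar>?p1 (Suc T) (ext3 x y) - ?p2 (Suc T) (ext3 x y)\<bar>)
        \<le> \<bar>?p1 T x - ?p2 T x\<bar> + ?p2 T x * (2 * ?tv)" .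
  qed
  also have "\<dots> = (\<Sum>x\<in>trajs T. \<bar>?p1 T x - ?p2 T x\<bar>) + 2 * ?tv"
    by (simp add: sum.distrib sum_distrib_right[symmetric] tp_sum1[OF Suc(1)])
  also have "\<dots> \<le> 2 * real (T - 1) * ?tv + 2 * ?tv"
    using Suc(2) by simp
  also have "\<dots> = 2 * real (Suc T - 1) * ?tv"
    using Suc(1) by (simp add: algebra_simps of_nat_diff)
  finally show ?case .
qed

lemma emp_dist_bounds: "0 \<le> emp_dist T xs y" "emp_dist T xs y \<le> 1"
proof -
  show "0 \<le> emp_dist T xs y" unfolding emp_dist_def by simp
  have "card {t. t < T \<and> xs ! t = y} \<le> card {..<T}"
    by (intro card_mono) auto
  then show "emp_dist T xs y \<le> 1" unfolding emp_dist_def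
    by (cases "T = 0") (auto simp: divide_le_eq_1)
qed

lemma shannon_nonneg: "shannon_H (emp_dist T (xs :: ('x::finite) list)) \<ge> 0"
proof -
  have "emp_dist T xs y * ln (emp_dist T xs y) \<le> 0" for y
  proof (cases "emp_dist T xs y = 0")
    case False
    then have "emp_dist T xs y > 0" using emp_dist_bounds(1)[of T xs y] by simp
    then have "ln (emp_dist T xs y) \<le> 0" using emp_dist_bounds(2)[of T xs y] by simp
    then show ?thesis using emp_dist_bounds(1)[of T xs y] by (simp add: mult_nonneg_nonpos)
  qed simp
  then show ?thesis unfolding shannon_H_def by (simp add: sum_nonpos)
qed

lemma combine:
  fixes p1 p2 f :: "'x \<Rightarrow> real"
  assumes fin: "finite A" and s1: "sum p1 A = 1" and s2: "sum p2 A = 1"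
    and bnd: "\<And>x. x \<in> A \<Longrightarrow> p1 x \<noteq> p2 x \<Longrightarrow> 0 \<le> f x \<and> f x \<le> M"
  shows "\<bar>(\<Sum>x\<in>A. p1 x * f x) - (\<Sum>x\<in>A. p2 x * f x)\<bar> \<le> M / 2 * (\<Sum>x\<in>A. \<bar>p1 x - p2 x\<bar>)"
proof -
  have "(\<Sum>x\<in>A. p1 x * f x) - (\<Sum>x\<in>A. p2 x * f x) = (\<Sum>x\<in>A. (p1 x - p2 x) * (f x - M / 2))"
  proof -
    have "(\<Sum>x\<in>A. (p1 x - p2 x) * (f x - M / 2))
        = (\<Sum>x\<in>A. p1 x * f x - p2 x * f x - (M / 2 * p1 x - M / 2 * p2 x))"
      by (intro sum.cong refl) (simp add: field_simps)
    also have "\<dots> = (\<Sum>x\<in>A. p1 x * f x) - (\<Sum>x\<in>A. p2 x * f x) - (M / 2 * sum p1 A - M / 2 * sum p2 A)"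
      by (simp add: sum_subtractf sum_distrib_left)
    finally have "(\<Sum>x\<in>A. (p1 x - p2 x) * (f x - M / 2))
        = (\<Sum>x\<in>A. p1 x * f x) - (\<Sum>x\<in>A. p2 x * f x) - (M / 2 * sum p1 A - M / 2 * sum p2 A)" .
    then show ?thesis using s1 s2 by simp
  qed
  also have "\<bar>\<dots>\<bar> \<le> (\<Sum>x\<in>A. \<bar>(p1 x - p2 x) * (f x - M / 2)\<bar>)" by (rule sum_abs)
  also have "\<dots> \<le> (\<Sum>x\<in>A. M / 2 * \<bar>p1 x - p2 x\<bar>)"
  proof (rule sum_mono)
    fix x assume x: "x \<in> A"
    show "\<bar>(p1 x - p2 x) * (f x - M / 2)\<bar> \<le> M / 2 * \<bar>p1 x - p2 x\<bar>"
    proof (cases "p1 x = p2 x")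
      case False
      then have "0 \<le> f x" "f x \<le> M" using bnd[OF x] by auto
      then have "\<bar>f x - M / 2\<bar> \<le> M / 2" by linarith
      from mult_left_mono[OF this abs_ge_zero[of "p1 x - p2 x"]]
      show ?thesis by (simp only: abs_mult mult.commute)
    qed simp
  qed
  also have "\<dots> = M / 2 * (\<Sum>x\<in>A. \<bar>p1 x - p2 x\<bar>)" by (simp add: sum_distrib_left)
  finally show ?thesis .
qed


lemma main_bound:
  fixes mu :: "'s::finite pmf" and P :: "'s \<Rightarrow> 'a::finite \<Rightarrow> 's pmf" and Obs :: "'s \<Rightarrow> 'o::finite pmf"
    and pol1 pol2 :: "'i \<Rightarrow> 'a pmf" and g :: "'s list \<times> 'o list \<times> 'a list \<Rightarrow> 'x::finite list"
  assumes T: "T \<ge> 1"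
    and sup: "\<And>x. x \<in> trajs T \<Longrightarrow> tp mu P Obs info pol1 T x > 0 \<or> tp mu P Obs info pol2 T x > 0
              \<Longrightarrow> shannon_H (emp_dist T (g x)) \<le> M"
  shows "\<bar>(\<Sum>x\<in>trajs T. tp mu P Obs info pol1 T x * shannon_H (emp_dist T (g x)))
          - (\<Sum>x\<in>trajs T. tp mu P Obs info pol2 T x * shannon_H (emp_dist T (g x)))\<bar>
         \<le> real T * M * tv_policy pol1 pol2"
proof -
  let ?p1 = "tp mu P Obs info pol1 T" and ?p2 = "tp mu P Obs info pol2 T"
  let ?tv = "tv_policy pol1 pol2"
  have M0: "M \<ge> 0"
  proof -
    have "(\<Sum>x\<in>trajs T. ?p1 x) = 1" by (rule tp_sum1[OF T])
    then obtain x where x: "x \<in> trajs T" "?p1 x \<noteq> 0"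
      by (metis sum.neutral zero_neq_one)
    then have "?p1 x > 0" using tp_nonneg[of mu P Obs info pol1 T x] by simp
    then have "shannon_H (emp_dist T (g x)) \<le> M" using sup[OF x(1)] by blast
    then show ?thesis using shannon_nonneg[of T "g x"] by simp
  qed
  have "\<bar>(\<Sum>x\<in>trajs T. ?p1 x * shannon_H (emp_dist T (g x)))
          - (\<Sum>x\<in>trajs T. ?p2 x * shannon_H (emp_dist T (g x)))\<bar>
       \<le> M / 2 * (\<Sum>x\<in>trajs T. \<bar>?p1 x - ?p2 x\<bar>)"
  proof (rule combine[OF finite_trajs tp_sum1[OF T] tp_sum1[OF T]])
    fix x assume x: "x \<in> trajs T" and ne: "?p1 x \<noteq> ?p2 x"
    then have "?p1 x > 0 \<or> ?p2 x > 0"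
      using tp_nonneg[of mu P Obs info pol1 T x] tp_nonneg[of mu P Obs info pol2 T x] by linarith
    then show "0 \<le> shannon_H (emp_dist T (g x)) \<and> shannon_H (emp_dist T (g x)) \<le> M"
      using sup[OF x] shannon_nonneg by blast
  qed
  also have "\<dots> \<le> M / 2 * (2 * real (T - 1) * ?tv)"
    using M0 by (intro mult_left_mono tp_L1[OF T]) auto
  also have "\<dots> = M * real (T - 1) * ?tv" by simp
  also have "\<dots> \<le> M * real T * ?tv"
    using M0 tv_policy_nonneg[of pol1 pol2] by (intro mult_right_mono mult_left_mono) auto
  finally show ?thesis by (simp add: mult_ac)
qed

lemma J_state_tp: "J_state mu P Obs info pol T = (\<Sum>x\<in>trajs T. tp mu P Obs info pol T x * shannon_H (emp_dist T (fst x)))"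
  unfolding J_state_def tp_def by (intro sum.cong refl) (auto split: prod.splits)

lemma J_obs_tp: "J_obs mu P Obs info pol T = (\<Sum>x\<in>trajs T. tp mu P Obs info pol T x * shannon_H (emp_dist T (fst (snd x))))"
  unfolding J_obs_def tp_def by (intro sum.cong refl) (auto split: prod.splits)

lemma state_pos:
  fixes mu :: "'s::finite pmf" and P :: "'s \<Rightarrow> 'a::finite \<Rightarrow> 's pmf" and Obs :: "'s \<Rightarrow> 'o::finite pmf"
  assumes x: "x \<in> trajs T" and p: "tp mu P Obs info pol T x > 0"
  shows "state_traj_prob mu P Obs info pol T (fst x) > 0"
proof -
  obtain ss os acts where xx: "x = (ss, os, acts)" by (cases x) auto
  have "tp mu P Obs info pol T x \<le> state_traj_prob mu P Obs info pol T (fst x)"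
    unfolding state_traj_prob_def
    using member_le_sum[OF x, of "\<lambda>(ss', os, as). if ss' = fst x then traj_prob mu P Obs info pol T ss' os as else 0"]
    by (auto simp: xx tp_def traj_prob_nonneg finite_trajs split: prod.splits)
  then show ?thesis using p by simp
qed

lemma obs_pos:
  fixes mu :: "'s::finite pmf" and P :: "'s \<Rightarrow> 'a::finite \<Rightarrow> 's pmf" and Obs :: "'s \<Rightarrow> 'o::finite pmf"
  assumes x: "x \<in> trajs T" and p: "tp mu P Obs info pol T x > 0"
  shows "obs_traj_prob mu P Obs info pol T (fst (snd x)) > 0"
proof -
  obtain ss os acts where xx: "x = (ss, os, acts)" by (cases x) auto
  have "tp mu P Obs info pol T x \<le> obs_traj_prob mu P Obs info pol T (fst (snd x))"
    unfolding obs_traj_prob_def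
    using member_le_sum[OF x, of "\<lambda>(ss, os', as). if os' = fst (snd x) then traj_prob mu P Obs info pol T ss os' as else 0"]
    by (auto simp: xx tp_def traj_prob_nonneg finite_trajs split: prod.splits)
  then show ?thesis using p by simp
qed


theorem theorem2:
  fixes mu :: "'s::finite pmf"
    and P :: "'s \<Rightarrow> 'a::finite \<Rightarrow> 's pmf"
    and Obs :: "'s \<Rightarrow> 'o::finite pmf"
    and info :: "'o list \<Rightarrow> 'a list \<Rightarrow> 'i"
    and pol1 pol2 :: "'i \<Rightarrow> 'a pmf"
    and T :: nat
    and tauS :: "'s list" and tauO :: "'o list"
  assumes "T \<ge> 1"
    and tauS_mem: "tauS \<in> {ss. length ss = T \<and>
                 (state_traj_prob mu P Obs info pol1 T ss > 0 \<or> state_traj_prob mu P Obs info pol2 T ss > 0)}"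
    and tauS_max: "\<forall>ss \<in> {ss. length ss = T \<and>
                 (state_traj_prob mu P Obs info pol1 T ss > 0 \<or> state_traj_prob mu P Obs info pol2 T ss > 0)}.
                 shannon_H (emp_dist T ss) \<le> shannon_H (emp_dist T tauS)"
    and tauO_mem: "tauO \<in> {os. length os = T \<and>
                 (obs_traj_prob mu P Obs info pol1 T os > 0 \<or> obs_traj_prob mu P Obs info pol2 T os > 0)}"
    and tauO_max: "\<forall>os \<in> {os. length os = T \<and>
                 (obs_traj_prob mu P Obs info pol1 T os > 0 \<or> obs_traj_prob mu P Obs info pol2 T os > 0)}.
                 shannon_H (emp_dist T os) \<le> shannon_H (emp_dist T tauO)"
  shows "\<bar>J_state mu P Obs info pol1 T - J_state mu P Obs info pol2 T\<bar>
           \<le> real T * shannon_H (emp_dist T tauS) * tv_policy pol1 pol2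
       \<and> \<bar>J_obs mu P Obs info pol1 T - J_obs mu P Obs info pol2 T\<bar>
           \<le> real T * shannon_H (emp_dist T tauO) * tv_policy pol1 pol2"

proof -
  have T: "T \<ge> 1" by fact
  have lenx: "length (fst x) = T" "length (fst (snd x)) = T" if "x \<in> trajs T" for x :: "'s list \<times> 'o list \<times> 'a list"
    using that by (auto simp: trajs_def)
  have A: "\<bar>J_state mu P Obs info pol1 T - J_state mu P Obs info pol2 T\<bar>
           \<le> real T * shannon_H (emp_dist T tauS) * tv_policy pol1 pol2"
    unfolding J_state_tp
  proof (rule main_bound[OF T])
    fix x assume x: "x \<in> trajs T"
      and "tp mu P Obs info pol1 T x > 0 \<or> tp mu P Obs info pol2 T x > 0"
    then have "state_traj_prob mu P Obs info pol1 T (fst x) > 0 \<or> state_traj_prob mu P Obs info pol2 T (fst x) > 0"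
      using state_pos[OF x] by blast
    then show "shannon_H (emp_dist T (fst x)) \<le> shannon_H (emp_dist T tauS)"
      using tauS_max lenx[OF x] by blast
  qed
  have B: "\<bar>J_obs mu P Obs info pol1 T - J_obs mu P Obs info pol2 T\<bar>
           \<le> real T * shannon_H (emp_dist T tauO) * tv_policy pol1 pol2"
    unfolding J_obs_tp
  proof (rule main_bound[OF T])
    fix x assume x: "x \<in> trajs T"
      and "tp mu P Obs info pol1 T x > 0 \<or> tp mu P Obs info pol2 T x > 0"
    then have "obs_traj_prob mu P Obs info pol1 T (fst (snd x)) > 0 \<or> obs_traj_prob mu P Obs info pol2 T (fst (snd x)) > 0"
      using obs_pos[OF x] by blast
    then show "shannon_H (emp_dist T (fst (snd x))) \<le> shannon_H (emp_dist T tauO)"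
      using tauO_max lenx[OF x] by blast
  qed
  show ?thesis using A B by blast
qed

end
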